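(* Let $M$ be a set of machines, $c\ge1$ a constant, $J$ a set of jobs with $|J|\le|M|^c$, and $L,l$ integers with $2|M|^c\ge L$ and $l\ge150c\ln|M|/\ln\ln|M|$. Then for every $s$, the number of bad patterns (for $M,L,l,J$) of size $s=\sum_{T,m}|B_{T,m}|$ is at most $2\exp\!\left(\frac{|J|\ln l}{8}\right)\left(\frac{eC(J)}{l}\right)^s$.
   Context: Jobs: each job $j$ has a machine sequence $\mathrm{seq}(j)\in M^*$ and a unique identifier. Standing assumption: $|M|\ge32$. $C(J)=\max_{m\in M}\sum_{j\in J}|\{i:\mathrm{seq}(j)_i=m\}|$. A bad pattern (for $M,L,l,J$) is a collection of sets $B_{T,m}$, for $0\le T<2L$ and $m\in M$, of (job, sequence position) pairs $(j,i)$, $j\in J$, such that $\mathrm{seq}(j)_i=m$ for all $(j,i)\in B_{T,m}$; each $j\in J$ appears at most once in $\bigsqcup B_{T,m}$; $|B_{T,m}|\in\{0\}\cup(l,|J|]$ for all $(T,m)$; and $\sum_{T,m}|B_{T,m}|>|J|/2$. *)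

theory Defs
  imports Complex_Main
begin

definition occ :: "('j \<Rightarrow> 'm list) \<Rightarrow> 'j \<Rightarrow> 'm \<Rightarrow> nat" where
  "occ seq j m = card {i. i < length (seq j) \<and> seq j ! i = m}"

definition congestion :: "'m set \<Rightarrow> ('j \<Rightarrow> 'm list) \<Rightarrow> 'j set \<Rightarrow> nat" where
  "congestion M seq J = Max ((\<lambda>m. \<Sum>j\<in>J. occ seq j m) ` M)"

text \<open>A bad pattern: family B T m of (job, position) pairs, indexed by 0 \<le> T < 2L and m \<in> M.
  Outside this index range B is required to be empty (so patterns are finite objects).\<close>
definition bad_pattern ::
  "'m set \<Rightarrow> int \<Rightarrow> int \<Rightarrow> ('j \<Rightarrow> 'm list) \<Rightarrow> 'j set \<Rightarrow> (int \<Rightarrow> 'm \<Rightarrow> ('j \<times> nat) set) \<Rightarrow> bool" where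
  "bad_pattern M L l seq J B \<longleftrightarrow>
     (\<forall>T m. (T \<notin> {0..<2*L} \<or> m \<notin> M) \<longrightarrow> B T m = {}) \<and>
     (\<forall>T\<in>{0..<2*L}. \<forall>m\<in>M. \<forall>(j,i)\<in>B T m. j \<in> J \<and> i < length (seq j) \<and> seq j ! i = m) \<and>
     (\<forall>T\<in>{0..<2*L}. \<forall>m\<in>M. \<forall>T'\<in>{0..<2*L}. \<forall>m'\<in>M. \<forall>j i i'.
        (j,i) \<in> B T m \<longrightarrow> (j,i') \<in> B T' m' \<longrightarrow> T = T' \<and> m = m' \<and> i = i') \<and>
     (\<forall>T\<in>{0..<2*L}. \<forall>m\<in>M. card (B T m) = 0 \<or>
        (l < int (card (B T m)) \<and> card (B T m) \<le> card J)) \<and>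
     2 * (\<Sum>T\<in>{0..<2*L}. \<Sum>m\<in>M. card (B T m)) > card J"

definition pattern_size :: "'m set \<Rightarrow> int \<Rightarrow> (int \<Rightarrow> 'm \<Rightarrow> ('j \<times> nat) set) \<Rightarrow> nat" where
  "pattern_size M L B = (\<Sum>T\<in>{0..<2*L}. \<Sum>m\<in>M. card (B T m))"

end

theory Submission imports Defs "HOL-Library.FuncSet" begin

lemma ln_sublin: fixes u :: real assumes "u > 0" shows "ln u \<le> (21/25) * u"
proof -
  define t where "t = sqrt u"
  have t0: "t > 0" using assms by (simp add: t_def)
  have u: "u = t^2" using assms by (simp add: t_def)
  have "ln u = 2 * ln t" using t0 by (simp add: u ln_realpow)
  also have "\<dots> \<le> 2 * (t - 1)" using ln_le_minus_one[OF t0] by simp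
  also have "\<dots> \<le> (21/25) * t^2"
  proof -
    have "0 \<le> (t - 25/21)^2" by simp
    thus ?thesis by (simp add: power2_eq_square algebra_simps)
  qed
  finally show ?thesis by (simp add: u)
qed

lemma fact_pow: "real b ^ b \<le> fact b * exp (real b)"
proof (induction b)
  case 0 then show ?case by simp
next
  case (Suc b)
  have step: "(real b + 1) ^ b \<le> exp 1 * real b ^ b"
  proof (cases "b = 0")
    case True then show ?thesis by simp
  next
    case False
    hence bp: "real b > 0" by simp
    have "1 + 1 / real b \<le> exp (1 / real b)" by (rule exp_ge_add_one_self)
    hence "real b * (1 + 1 / real b) \<le> real b * exp (1 / real b)"
      using bp by (intro mult_left_mono) auto
    moreover have "real b * (1 + 1 / real b) = real b + 1" using bp by (simp add: field_simps)
    ultimately have "real b + 1 \<le> real b * exp (1 / real b)" by linarith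
    hence "(real b + 1) ^ b \<le> (real b * exp (1 / real b)) ^ b"
      by (intro power_mono) auto
    also have "\<dots> = real b ^ b * exp (real b * (1 / real b))"
      by (simp only: power_mult_distrib exp_of_nat_mult)
    also have "\<dots> = exp 1 * real b ^ b" using bp by simp
    finally show ?thesis .
  qed
  have "real (Suc b) ^ Suc b = (real b + 1) * (real b + 1) ^ b" by (simp add: add.commute)
  also have "\<dots> \<le> (real b + 1) * (exp 1 * real b ^ b)"
    using step by (intro mult_left_mono) auto
  also have "\<dots> \<le> (real b + 1) * (exp 1 * (fact b * exp (real b)))"
    using Suc.IH by (intro mult_left_mono) auto
  also have "\<dots> = fact (Suc b) * exp (real (Suc b))"
    by (simp add: exp_add algebra_simps)
  finally show ?case .
qed

lemma binom_fact: "real (n choose b) * fact b \<le> real n ^ b"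
proof (cases "b \<le> n")
  case True
  have e: "fact b * fact (n - b) * (n choose b) = fact n" using binomial_fact_lemma[OF True] .
  have "fact n div fact (n - b) = fact b * (n choose b)"
    using e by (metis fact_gt_zero mult.commute nonzero_mult_div_cancel_left not_less0 mult.assoc)
  hence "fact b * (n choose b) \<le> n ^ b" using fact_div_fact_le_pow[OF True] by simp
  hence "real (fact b * (n choose b)) \<le> real (n ^ b)" by (simp only: of_nat_le_iff)
  thus ?thesis by (simp add: mult.commute)
next
  case False then show ?thesis by (simp add: binomial_eq_0)
qed

lemma term_bound:
  fixes C l y :: real
  assumes C: "0 < C" "real n \<le> C" and l: "0 < l" "l \<le> real b" and y: "0 \<le> y"
  shows "real (n choose b) * (y * l / (exp 1 * C))^b \<le> y^b"
proof -
  have fb: "fact b > (0::real)" by simp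
  have "real (n choose b) * (y * l / (exp 1 * C))^b
      = (real (n choose b) * fact b) * (y * l / (exp 1 * C))^b / fact b" using fb by simp
  also have "\<dots> \<le> real n ^ b * (y * l / (exp 1 * C))^b / fact b"
    using binom_fact fb y l C by (intro divide_right_mono mult_right_mono) auto
  also have "\<dots> \<le> C ^ b * (y * l / (exp 1 * C))^b / fact b"
    using fb y l C by (intro divide_right_mono mult_right_mono power_mono) auto
  also have "\<dots> = y ^ b * (l ^ b / (exp 1 ^ b * fact b))"
    using C by (simp add: power_mult_distrib power_divide field_simps)
  also have "\<dots> \<le> y ^ b * (real b ^ b / (exp 1 ^ b * fact b))"
    using y l fb by (intro mult_left_mono divide_right_mono power_mono) auto
  also have "real b ^ b / (exp 1 ^ b * fact b) \<le> 1"
    using fact_pow[of b] fb by (simp add: exp_of_nat_mult[symmetric] mult.commute)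
  hence "y ^ b * (real b ^ b / (exp 1 ^ b * fact b)) \<le> y ^ b * 1"
    using y by (intro mult_left_mono) auto
  finally show ?thesis by simp
qed

lemma analytic:
  fixes mm c l :: real
  assumes m: "mm \<ge> 32" and c: "c \<ge> 1" and l: "l \<ge> 150 * c * ln mm / ln (ln mm)"
  shows "l \<ge> 150" and "ln 24 + (c+1) * ln mm \<le> l * ln l / 8"
proof -
  define a where "a = ln mm"
  define u where "u = ln a"
  have "exp 1 < mm" using exp_le m by linarith
  hence a1: "a > 1" unfolding a_def
    using ln_less_cancel_iff[of "exp 1" mm] m by simp
  have u0: "u > 0" unfolding u_def using a1 by simp
  have ua: "u < a" unfolding u_def using a1 ln_less_self[of a] by linarith
  define L0 where "L0 = 150 * c * a / u"
  have lL0: "l \<ge> L0" using l by (simp add: L0_def a_def u_def)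
  have "a / u \<ge> 1" using ua u0 by simp
  hence L0ge: "L0 \<ge> 150"
  proof -
    have "150 * c * (a/u) \<ge> 150 * 1 * 1" using c \<open>a/u \<ge> 1\<close> by (intro mult_mono) auto
    thus ?thesis by (simp add: L0_def)
  qed
  thus "l \<ge> 150" using lL0 by linarith
  have "ln L0 = ln 150 + ln c + ln a - ln u" unfolding L0_def using c a1 u0
    by (simp add: ln_mult ln_div)
  moreover have "ln 150 \<ge> (0::real)" by simp
  moreover have "ln c \<ge> 0" using c by simp
  moreover have "ln u \<le> (21/25) * u" using ln_sublin u0 by simp
  moreover have "ln a = u" by (simp add: u_def)
  ultimately have lnL0: "ln L0 \<ge> (4/25) * u" by linarith
  have "l * ln l \<ge> L0 * ln L0"
    using lL0 L0ge by (intro mult_mono) auto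
  moreover have "L0 * ln L0 \<ge> L0 * ((4/25) * u)"
    using lnL0 L0ge by (intro mult_left_mono) auto
  moreover have "L0 * ((4/25) * u) = 24 * c * a" unfolding L0_def using u0 by simp
  moreover have "ln 24 \<le> a" unfolding a_def using m by simp
  moreover have "a \<le> c * a" using c a1 by simp
  moreover have "(c+1)*a = c*a + a" "24*c*a = 24*(c*a)" by (simp_all add: algebra_simps)
  ultimately show "ln 24 + (c+1) * ln mm \<le> l * ln l / 8" unfolding a_def[symmetric]
    by linarith
qed

lemma geom_bound:
  fixes y :: real assumes "0 \<le> y" "y \<le> 2/3"
  shows "(\<Sum>b\<in>{p..n}. y ^ b) \<le> 3 * y ^ p"
proof (cases "p \<le> n")
  case True
  have "(1 - y) * (\<Sum>b\<in>{p..n}. y ^ b) = y ^ p - y ^ Suc n"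
    using sum_gp_multiplied[OF True] .
  also have "\<dots> \<le> y ^ p" using assms by simp
  finally have h: "(1 - y) * (\<Sum>b\<in>{p..n}. y ^ b) \<le> y ^ p" .
  have s0: "(\<Sum>b\<in>{p..n}. y ^ b) \<ge> 0" using assms by (intro sum_nonneg) auto
  have "(1/3) * (\<Sum>b\<in>{p..n}. y ^ b) \<le> (1 - y) * (\<Sum>b\<in>{p..n}. y ^ b)"
    using assms s0 by (intro mult_right_mono) auto
  with h show ?thesis by linarith
next
  case False then show ?thesis using assms by simp
qed

lemma slot_bound:
  fixes Ops :: "'a set" and C y :: real and l :: int
  assumes fin: "finite Ops" and nC: "real (card Ops) \<le> C" and C: "C > 0" and l: "l > 0"
    and y: "0 \<le> y" "y \<le> 2/3"
  shows "(\<Sum>A\<in>{A. A \<subseteq> Ops \<and> (A = {} \<or> l < int (card A))}. (y * l / (exp 1 * C)) ^ card A)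
         \<le> 1 + 3 * y ^ (nat l + 1)"
proof -
  define x where "x = y * l / (exp 1 * C)"
  define G1 where "G1 = {A. A \<subseteq> Ops \<and> l < int (card A)}"
  have finG1: "finite G1" unfolding G1_def using fin by auto
  have G: "{A. A \<subseteq> Ops \<and> (A = {} \<or> l < int (card A))} = insert {} G1"
    unfolding G1_def by auto
  have nin: "{} \<notin> G1" unfolding G1_def using l by auto
  have "(\<Sum>A\<in>{A. A \<subseteq> Ops \<and> (A = {} \<or> l < int (card A))}. x ^ card A) = 1 + (\<Sum>A\<in>G1. x ^ card A)"
    unfolding G using finG1 nin by simp
  also have "(\<Sum>A\<in>G1. x ^ card A) = (\<Sum>b\<in>{nat l + 1..card Ops}. \<Sum>A\<in>{A\<in>G1. card A = b}. x ^ card A)"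
  proof (rule sum.group[symmetric])
    show "finite G1" by (rule finG1)
    show "finite {nat l + 1..card Ops}" by simp
    show "card ` G1 \<subseteq> {nat l + 1..card Ops}"
    proof
      fix b assume "b \<in> card ` G1"
      then obtain A where A: "A \<subseteq> Ops" "l < int (card A)" "b = card A" unfolding G1_def by auto
      have "card A \<le> card Ops" using card_mono[OF fin A(1)] .
      moreover have "nat l + 1 \<le> card A" using A(2) l by (simp add: nat_less_iff)
      ultimately show "b \<in> {nat l + 1..card Ops}" using A(3) by simp
    qed
  qed
  also have "\<dots> = (\<Sum>b\<in>{nat l + 1..card Ops}. real (card Ops choose b) * x ^ b)"
  proof (rule sum.cong[OF refl])
    fix b assume b: "b \<in> {nat l + 1..card Ops}"
    have "{A\<in>G1. card A = b} = {A. A \<subseteq> Ops \<and> card A = b}" unfolding G1_def using b l by auto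
    hence "(\<Sum>A\<in>{A\<in>G1. card A = b}. x ^ card A) = (\<Sum>A\<in>{A. A \<subseteq> Ops \<and> card A = b}. x ^ b)"
      by simp
    also have "\<dots> = real (card Ops choose b) * x ^ b" using n_subsets[OF fin, of b] by simp
    finally show "(\<Sum>A\<in>{A\<in>G1. card A = b}. x ^ card A) = real (card Ops choose b) * x ^ b" .
  qed
  also have "\<dots> \<le> (\<Sum>b\<in>{nat l + 1..card Ops}. y ^ b)"
  proof (rule sum_mono)
    fix b assume b: "b \<in> {nat l + 1..card Ops}"
    hence "real_of_int l \<le> real b" using l by auto
    thus "real (card Ops choose b) * x ^ b \<le> y ^ b" unfolding x_def
      using term_bound[OF C nC, of "real_of_int l" b y] l y by simp
  qed
  also have "\<dots> \<le> 3 * y ^ (nat l + 1)" using geom_bound y by blast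
  finally show ?thesis unfolding x_def by simp
qed


theorem lemma5p16:
  fixes M :: "'m set" and J :: "'j set" and seq :: "'j \<Rightarrow> 'm list"
    and c :: real and L l :: int and s :: nat
  assumes "finite M" and "card M \<ge> 32"
    and "finite J" and "\<forall>j\<in>J. set (seq j) \<subseteq> M"
    and "c \<ge> 1"
    and "real (card J) \<le> real (card M) powr c"
    and "2 * real (card M) powr c \<ge> real_of_int L"
    and "real_of_int l \<ge> 150 * c * ln (real (card M)) / ln (ln (real (card M)))"
  shows "real (card {B. bad_pattern M L l seq J B \<and> pattern_size M L B = s})
    \<le> 2 * exp (real (card J) * ln (real_of_int l) / 8)
        * (exp 1 * real (congestion M seq J) / real_of_int l) ^ s"
proof -
  note finM = assms(1) and finJ = assms(3) and cge = assms(5) and Jb = assms(6) and Lb = assms(7)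
  define mm where "mm = real (card M)"
  have mm32: "mm \<ge> 32" using assms(2) unfolding mm_def by simp
  have l8: "real_of_int l \<ge> 150 * c * ln mm / ln (ln mm)" using assms(8) unfolding mm_def .
  have l150: "real_of_int l \<ge> 150" and key: "ln 24 + (c+1) * ln mm \<le> real_of_int l * ln (real_of_int l) / 8"
    using analytic[OF mm32 cge l8] by auto
  have l0: "l > 0" using l150 by simp
  define C where "C = congestion M seq J"
  define P where "P = {B. bad_pattern M L l seq J B \<and> pattern_size M L B = s}"
  define Ops where "Ops = (\<lambda>m. SIGMA j:J. {i. i < length (seq j) \<and> seq j ! i = m})"
  define S where "S = {0..<2*L} \<times> M"
  define G where "G = (\<lambda>t::int \<times> 'm. {A. A \<subseteq> Ops (snd t) \<and> (A = {} \<or> l < int (card A))})"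
  have finOps: "finite (Ops m)" for m unfolding Ops_def using finJ by (auto intro!: finite_SigmaI)
  have cardOps: "card (Ops m) = (\<Sum>j\<in>J. occ seq j m)" for m
    unfolding Ops_def occ_def using finJ by (subst card_SigmaI) auto
  have OpsC: "card (Ops m) \<le> C" if "m \<in> M" for m
    unfolding C_def congestion_def cardOps using finM that by (intro Max_ge) auto
  have finS: "finite S" unfolding S_def using finM by simp
  show ?thesis
  proof (cases "P = {}")
    case True
    have "0 \<le> 2 * exp (real (card J) * ln (real_of_int l) / 8) * (exp 1 * real C / real_of_int l) ^ s"
      using l0 by simp
    thus ?thesis unfolding P_def[symmetric] C_def[symmetric] using True by simp
  next
    case False
    then obtain B0 where B0: "B0 \<in> P" by auto
    have bp: "bad_pattern M L l seq J B0" and ps: "pattern_size M L B0 = s"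
      using B0 unfolding P_def by auto
    have subB: "B \<in> P \<Longrightarrow> B T m \<subseteq> Ops m" for B T m
    proof -
      assume "B \<in> P"
      hence bpd: "bad_pattern M L l seq J B" unfolding P_def by auto
      show "B T m \<subseteq> Ops m"
      proof (cases "T \<in> {0..<2*L} \<and> m \<in> M")
        case True
        thus ?thesis using bpd unfolding bad_pattern_def Ops_def by fastforce
      next
        case False
        thus ?thesis using bpd unfolding bad_pattern_def by blast
      qed
    qed
    have sumS: "(\<Sum>t\<in>S. card (B0 (fst t) (snd t))) = s"
      using ps unfolding pattern_size_def S_def by (simp add: sum.cartesian_product split_def)
    define U where "U = (SIGMA t:S. B0 (fst t) (snd t))"
    have cardU: "card U = s" unfolding U_def using finS finite_subset[OF subB[OF B0] finOps] sumS
      by (subst card_SigmaI) auto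
    have c3: "\<forall>T\<in>{0..<2*L}. \<forall>m\<in>M. \<forall>T'\<in>{0..<2*L}. \<forall>m'\<in>M. \<forall>j i i'.
        (j,i) \<in> B0 T m \<longrightarrow> (j,i') \<in> B0 T' m' \<longrightarrow> T = T' \<and> m = m' \<and> i = i'"
      using bp unfolding bad_pattern_def by blast
    have injU: "inj_on (\<lambda>p. fst (snd p)) U"
    proof (rule inj_onI)
      fix p q assume p: "p \<in> U" and q: "q \<in> U" and e: "fst (snd p) = fst (snd q)"
      obtain T m j i where pp: "p = ((T,m),(j,i))" by (metis prod.collapse)
      obtain T' m' j' i' where qq: "q = ((T',m'),(j',i'))" by (metis prod.collapse)
      have "T \<in> {0..<2*L}" "m \<in> M" "(j,i) \<in> B0 T m" using p pp unfolding U_def S_def by auto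
      moreover have "T' \<in> {0..<2*L}" "m' \<in> M" "(j',i') \<in> B0 T' m'" using q qq unfolding U_def S_def by auto
      moreover have "j = j'" using e pp qq by simp
      ultimately have "T = T' \<and> m = m' \<and> i = i'" using c3 by blast
      thus "p = q" using pp qq \<open>j = j'\<close> by simp
    qed
    have imU: "(\<lambda>p. fst (snd p)) ` U \<subseteq> J"
      using subB[OF B0] unfolding U_def Ops_def by fastforce
    have sJ: "s \<le> card J" using card_inj_on_le[OF injU imU finJ] cardU by simp
    have c5: "2 * (\<Sum>T\<in>{0..<2*L}. \<Sum>m\<in>M. card (B0 T m)) > card J"
      using bp unfolding bad_pattern_def by blast
    hence "s > 0" using ps unfolding pattern_size_def by simp
    hence "U \<noteq> {}" using cardU by auto
    then obtain T m j i where "((T,m),(j,i)) \<in> U" by (metis prod.collapse ex_in_conv)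
    hence mM: "m \<in> M" and ji: "(j,i) \<in> Ops m" using subB[OF B0] unfolding U_def S_def by auto
    have "card (Ops m) > 0" using ji finOps by (auto simp: card_gt_0_iff)
    hence Cpos: "real C > 0" using OpsC[OF mM] by simp
    define y where "y = real_of_int l powr (-1/8)"
    define x where "x = y * real_of_int l / (exp 1 * real C)"
    define z where "z = 3 * y ^ (nat l + 1)"
    have lpos: "real_of_int l > 0" using l0 by simp
    have y0: "y > 0" unfolding y_def using lpos by simp
    have "y ^ 8 = real_of_int l powr (of_nat 8 * (-1/8))"
      unfolding y_def using lpos by (intro powr_power) auto
    also have "\<dots> = real_of_int l powr (- 1)" by simp
    also have "\<dots> = 1 / real_of_int l" using lpos by (simp add: powr_minus_divide)
    finally have y8: "y ^ 8 = 1 / real_of_int l" .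
    have y23: "y \<le> 2/3"
    proof (rule ccontr)
      assume "\<not> y \<le> 2/3"
      hence "(2/3::real) ^ 8 \<le> y ^ 8" by (intro power_mono) auto
      hence "(2/3::real)^8 \<le> 1 / real_of_int l" using y8 by simp
      moreover have "1 / real_of_int l \<le> 1 / 150" using l150 by (intro divide_left_mono) auto
      moreover have "(2/3::real)^8 = 256/6561" by (simp add: power_numeral_reduce)
      ultimately show False by linarith
    qed
    have x0: "x > 0" unfolding x_def using y0 lpos Cpos by simp
    define Q where "Q = {f \<in> PiE S G. (\<Sum>t\<in>S. card (f t)) = s}"
    have finG: "finite (G t)" for t unfolding G_def using finOps by auto
    have finPiE: "finite (PiE S G)" using finS finG by (intro finite_PiE) auto
    define r where "r = (\<lambda>B :: int \<Rightarrow> 'm \<Rightarrow> ('j \<times> nat) set. restrict (\<lambda>t. B (fst t) (snd t)) S)"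
    have injr: "inj_on r P"
    proof (rule inj_onI)
      fix B B' assume BP: "B \<in> P" and BP': "B' \<in> P" and e: "r B = r B'"
      show "B = B'"
      proof (intro ext)
        fix T m
        show "B T m = B' T m"
        proof (cases "(T,m) \<in> S")
          case True
          have "r B (T,m) = r B' (T,m)" using e by simp
          thus ?thesis using True unfolding r_def by simp
        next
          case False
          hence "T \<notin> {0..<2*L} \<or> m \<notin> M" unfolding S_def by auto
          thus ?thesis using BP BP' unfolding P_def bad_pattern_def by auto
        qed
      qed
    qed
    have imr: "r ` P \<subseteq> Q"
    proof
      fix f assume "f \<in> r ` P"
      then obtain B where BP: "B \<in> P" and f: "f = r B" by auto
      have bpB: "bad_pattern M L l seq J B" and psB: "pattern_size M L B = s"
        using BP unfolding P_def by auto
      have "f \<in> PiE S G"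
      proof -
        have "B T m \<in> G (T,m)" if "(T,m) \<in> S" for T m
        proof -
          have TM: "T \<in> {0..<2*L}" "m \<in> M" using that unfolding S_def by auto
          have sub: "B T m \<subseteq> Ops m" using subB[OF BP] .
          have "card (B T m) = 0 \<or> l < int (card (B T m))"
            using bpB TM unfolding bad_pattern_def by auto
          moreover have "card (B T m) = 0 \<Longrightarrow> B T m = {}"
            using finite_subset[OF sub finOps] by simp
          ultimately show ?thesis unfolding G_def using sub by auto
        qed
        thus ?thesis unfolding f r_def by auto
      qed
      moreover have "(\<Sum>t\<in>S. card (f t)) = s"
      proof -
        have "(\<Sum>t\<in>S. card (f t)) = (\<Sum>t\<in>S. card (B (fst t) (snd t)))"
          unfolding f r_def by (intro sum.cong) auto
        also have "\<dots> = s" using psB unfolding pattern_size_def S_def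
          by (simp add: sum.cartesian_product split_def)
        finally show ?thesis .
      qed
      ultimately show "f \<in> Q" unfolding Q_def by auto
    qed
    have finQ: "finite Q" unfolding Q_def using finPiE by auto
    have cardPQ: "card P \<le> card Q" using card_inj_on_le[OF injr imr finQ] .
    have "real (card Q) * x ^ s = (\<Sum>f\<in>Q. \<Prod>t\<in>S. x ^ card (f t))"
    proof -
      have "(\<Sum>f\<in>Q. \<Prod>t\<in>S. x ^ card (f t)) = (\<Sum>f\<in>Q. x ^ s)"
        by (intro sum.cong) (auto simp: Q_def power_sum[symmetric])
      thus ?thesis by simp
    qed
    also have "\<dots> \<le> (\<Sum>f\<in>PiE S G. \<Prod>t\<in>S. x ^ card (f t))"
      using finPiE x0 by (intro sum_mono2) (auto simp: Q_def intro!: prod_nonneg)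
    also have "\<dots> = (\<Prod>t\<in>S. \<Sum>A\<in>G t. x ^ card A)"
      using prod_sum_PiE[OF finS finG, of "\<lambda>t A. x ^ card A"] by simp
    also have "\<dots> \<le> (\<Prod>t\<in>S. 1 + z)"
    proof (rule prod_mono)
      fix t assume tS: "t \<in> S"
      hence "snd t \<in> M" unfolding S_def by auto
      hence "real (card (Ops (snd t))) \<le> real C" using OpsC by simp
      hence "(\<Sum>A\<in>G t. x ^ card A) \<le> 1 + 3 * y ^ (nat l + 1)"
        unfolding G_def x_def using slot_bound[OF finOps _ Cpos l0 _ y23] y0 by simp
      moreover have "0 \<le> (\<Sum>A\<in>G t. x ^ card A)" using x0 by (intro sum_nonneg) auto
      ultimately show "0 \<le> (\<Sum>A\<in>G t. x ^ card A) \<and> (\<Sum>A\<in>G t. x ^ card A) \<le> 1 + z"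
        unfolding z_def by simp
    qed
    also have "\<dots> = (1 + z) ^ card S" by simp
    also have "\<dots> \<le> exp z ^ card S"
      using y0 unfolding z_def by (intro power_mono) (auto simp: exp_ge_add_one_self add.commute)
    also have "\<dots> = exp (real (card S) * z)" by (simp add: exp_of_nat_mult)
    also have "\<dots> \<le> exp (1/2)"
    proof -
      have mm0: "mm > 0" using mm32 by simp
      have cS: "real (card S) = real (nat (2*L)) * mm" unfolding S_def mm_def by (simp add: card_cartesian_product)
      have nL: "real (nat (2*L)) \<le> 4 * mm powr c"
      proof (cases "L \<le> 0")
        case True thus ?thesis by simp
      next
        case False thus ?thesis using Lb unfolding mm_def by simp
      qed
      have "y ^ (nat l + 1) \<le> y ^ nat l" using y0 y23 by (intro power_decreasing) auto
      hence z1: "z \<le> 3 * y ^ nat l" unfolding z_def by simp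
      have "y ^ nat l = real_of_int l powr (of_nat (nat l) * (-1/8))"
        unfolding y_def using lpos by (intro powr_power) auto
      also have "\<dots> = exp (- (real_of_int l * ln (real_of_int l) / 8))"
        using lpos l0 by (simp add: powr_def)
      finally have yl: "y ^ nat l = exp (- (real_of_int l * ln (real_of_int l) / 8))" .
      have mmc: "4 * mm powr c * mm = 4 * exp ((c+1) * ln mm)"
        using mm0 by (simp add: powr_def exp_add algebra_simps)
      have z0: "0 \<le> z" unfolding z_def using y0 by simp
      have "real (card S) * z \<le> (4 * mm powr c * mm) * (3 * y ^ nat l)"
        unfolding cS using nL z1 z0 mm0 by (intro mult_mono) auto
      also have "\<dots> = 12 * exp ((c+1) * ln mm - real_of_int l * ln (real_of_int l) / 8)"
        unfolding mmc yl using exp_add[of "(c+1)*ln mm" "- (real_of_int l * ln (real_of_int l) / 8)"]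
        by simp
      also have "\<dots> \<le> 12 * exp (- ln 24)" using key by simp
      also have "\<dots> = 1/2" by (simp add: exp_minus)
      finally have "real (card S) * z \<le> 1/2" .
      thus ?thesis by simp
    qed
    also have "\<dots> \<le> 2"
    proof -
      have "exp (1/2::real) ^ 2 = exp 1" by (simp add: exp_of_nat_mult[symmetric])
      also have "\<dots> \<le> 2 ^ 2" using exp_le by simp
      finally show ?thesis by (rule power2_le_imp_le) auto
    qed
    finally have Qx: "real (card Q) * x ^ s \<le> 2" .
    have "real (card P) * x ^ s \<le> real (card Q) * x ^ s"
      using cardPQ x0 by (intro mult_right_mono) auto
    hence "real (card P) * x ^ s \<le> 2" using Qx by linarith
    hence "real (card P) \<le> 2 / x ^ s" using x0 by (simp add: field_simps)
    also have "2 / x ^ s = 2 * (1 / y) ^ s * (exp 1 * real C / real_of_int l) ^ s"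
      unfolding x_def using y0 lpos Cpos by (simp add: field_simps power_mult_distrib power_divide)
    also have "(1 / y) ^ s \<le> exp (real (card J) * ln (real_of_int l) / 8)"
    proof -
      have "1 / y = real_of_int l powr (1/8)" unfolding y_def using lpos
        by (simp add: powr_minus_divide)
      hence "(1 / y) ^ s = real_of_int l powr (of_nat s * (1/8))" using lpos
        by (simp add: powr_power)
      also have "\<dots> = exp (real s * ln (real_of_int l) / 8)" using lpos by (simp add: powr_def)
      also have "\<dots> \<le> exp (real (card J) * ln (real_of_int l) / 8)"
        using sJ l150 by (simp add: mult_right_mono)
      finally show ?thesis .
    qed
    hence "2 * (1 / y) ^ s * (exp 1 * real C / real_of_int l) ^ s
         \<le> 2 * exp (real (card J) * ln (real_of_int l) / 8) * (exp 1 * real C / real_of_int l) ^ s"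
      using lpos by (intro mult_right_mono) auto
    finally show ?thesis unfolding P_def C_def .
  qed
qed

end
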